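(* Let $m\ge3$ be an integer, $\beta=\frac{m+\sqrt{m^2-4}}{2}$, and let $\mathbf U=(U_k)$ be given by $U_{-1}=0$, $U_0=1$, $U_{k+1}=mU_k-U_{k-1}$ for $k\in\mathbb N$. Let $n\in\mathbb N$ have $\mathbf U$-expansion $(n)_{\mathbf U}=a_Na_{N-1}\cdots a_1a_0$. Then the $\mathbf U$-expansion of $\lfloor n/\beta\rfloor$ is $a_Na_{N-1}\cdots a_1$ (with leading zeros removed; empty word meaning $0$), and the $\beta$-expansion of the fractional part $\{n/\beta\}$ is $$d_\beta(\{n/\beta\})=a_0a_1\cdots a_{N-1}a_N0^\omega.$$
   Context: $\mathbf U$-expansion: for $n\ge1$, $(n)_{\mathbf U}=a_N\cdots a_0$ is the unique string of non-negative integers with $a_N\ne0$, $n=\sum_{k=0}^N a_kU_k$ and $\sum_{k=0}^i a_kU_k<U_{i+1}$ for all $i\le N$ (the greedy representation); equivalently, a string over $\{0,\dots,m-1\}$ with nonzero leading digit not containing any factor $(m-1)(m-2)^{j}(m-1)$, $j\ge0$. The expansion of $0$ is the empty word. $\beta$-expansion: for $x\in[0,1)$, with $T_\beta(x)=\beta x-\lfloor\beta x\rfloor$, $d_\beta(x)=(x_i)_{i\ge1}$ where $x_i=\lfloor\beta T_\beta^{i-1}(x)\rfloor$, so that $x=\sum_{i\ge1}x_i\beta^{-i}$. *)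

theory Defs
  imports Complex_Main
begin

text \<open>The sequence U: U_{-1} = 0, U_0 = 1, U_{k+1} = m U_k - U_{k-1}.
  We index from 0, so Useq m 1 = m * 1 - 0 = m. Values are integers.\<close>
fun Useq :: "nat \<Rightarrow> nat \<Rightarrow> int" where
  "Useq m 0 = 1"
| "Useq m (Suc 0) = int m"
| "Useq m (Suc (Suc k)) = int m * Useq m (Suc k) - Useq m k"

text \<open>Digit strings are stored little-endian: ds = [a_0, a_1, ..., a_N].
  ds is the (greedy) U-expansion of n iff its leading digit a_N is nonzero,
  n = sum a_k U_k, and sum_{k<=i} a_k U_k < U_{i+1} for all i <= N.\<close>
definition is_U_expansion :: "nat \<Rightarrow> nat \<Rightarrow> nat list \<Rightarrow> bool" where
  "is_U_expansion m n ds \<longleftrightarrow>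
     (ds \<noteq> [] \<longrightarrow> last ds \<noteq> 0) \<and>
     int n = (\<Sum>k<length ds. int (ds ! k) * Useq m k) \<and>
     (\<forall>i<length ds. (\<Sum>k\<le>i. int (ds ! k) * Useq m k) < Useq m (Suc i))"

definition U_expansion :: "nat \<Rightarrow> nat \<Rightarrow> nat list" where
  "U_expansion m n = (THE ds. is_U_expansion m n ds)"

text \<open>beta-transformation and beta-expansion; digits indexed from 1.\<close>
definition T_beta :: "real \<Rightarrow> real \<Rightarrow> real" where
  "T_beta \<beta> x = \<beta> * x - of_int \<lfloor>\<beta> * x\<rfloor>"

definition d_beta :: "real \<Rightarrow> real \<Rightarrow> nat \<Rightarrow> int" where
  "d_beta \<beta> x i = \<lfloor>\<beta> * (T_beta \<beta> ^^ (i - 1)) x\<rfloor>"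

end

theory Submission
  imports Defs
begin

definition vl :: "nat \<Rightarrow> nat list \<Rightarrow> int" where
  "vl m ds = (\<Sum>k<length ds. int (ds ! k) * Useq m k)"

definition gr :: "nat \<Rightarrow> nat list \<Rightarrow> bool" where
  "gr m ds = (\<forall>i<length ds. (\<Sum>k\<le>i. int (ds ! k) * Useq m k) < Useq m (Suc i))"

definition xv :: "real \<Rightarrow> nat list \<Rightarrow> real" where
  "xv b ds = (\<Sum>k<length ds. real (ds ! k) / b ^ Suc k)"

lemma isU_iff: "is_U_expansion m n ds \<longleftrightarrow> (ds \<noteq> [] \<longrightarrow> last ds \<noteq> 0) \<and> int n = vl m ds \<and> gr m ds"
  unfolding is_U_expansion_def vl_def gr_def by simp

lemma U_mono: assumes "m \<ge> 3" shows "1 \<le> Useq m k \<and> 2 * Useq m k \<le> Useq m (Suc k)"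
proof (induction k)
  case 0 then show ?case using assms by simp
next
  case (Suc k)
  then have "Useq m (Suc (Suc k)) = int m * Useq m (Suc k) - Useq m k" by simp
  moreover have "int m * Useq m (Suc k) \<ge> 3 * Useq m (Suc k)" using assms Suc by (intro mult_right_mono) auto
  ultimately show ?case using Suc by linarith
qed

lemma U_ge: assumes "m \<ge> 3" shows "Useq m k \<ge> int k + 1"
proof (induction k)
  case 0 then show ?case by simp
next
  case (Suc k) then show ?case using U_mono[OF assms, of k] by linarith
qed

lemma vl_snoc: "vl m (xs @ [x]) = vl m xs + int x * Useq m (length xs)"
proof -
  have "(\<Sum>k<length xs. int ((xs@[x]) ! k) * Useq m k) = (\<Sum>k<length xs. int (xs ! k) * Useq m k)"
    by (intro sum.cong) (auto simp: nth_append)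
  then show ?thesis unfolding vl_def by simp
qed

lemma vl_nonneg: assumes "m \<ge> 3" shows "0 \<le> vl m xs"
  unfolding vl_def using U_mono[OF assms] by (intro sum_nonneg) (smt (verit) mult_nonneg_nonneg of_nat_0_le_iff)

lemma gr_snoc: "gr m (xs @ [x]) \<longleftrightarrow> gr m xs \<and> vl m (xs @ [x]) < Useq m (Suc (length xs))"
proof -
  have A: "(\<Sum>k\<le>i. int ((xs@[x])!k) * Useq m k) = (\<Sum>k\<le>i. int (xs!k) * Useq m k)" if "i < length xs" for i
    using that by (intro sum.cong) (auto simp: nth_append)
  have B: "(\<Sum>k\<le>length xs. int ((xs@[x])!k) * Useq m k) = vl m (xs@[x])"
    unfolding vl_def by (simp add: lessThan_Suc_atMost)
  show ?thesis unfolding gr_def using A B by (auto simp: less_Suc_eq)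
qed

lemma gr_bound: assumes "gr m xs" shows "vl m xs < Useq m (length xs)"
proof (cases xs rule: rev_cases)
  case Nil then show ?thesis by (simp add: vl_def)
next
  case (snoc ys y) then show ?thesis using assms gr_snoc by simp
qed

lemma gr_unique: assumes m3: "m \<ge> 3"
  shows "gr m xs \<Longrightarrow> gr m ys \<Longrightarrow> length xs = length ys \<Longrightarrow> vl m xs = vl m ys \<Longrightarrow> xs = ys"
proof (induction xs arbitrary: ys rule: rev_induct)
  case Nil then show ?case by simp
next
  case (snoc x xs)
  obtain ys' y where ys: "ys = ys' @ [y]" using snoc.prems(3) by (cases ys rule: rev_cases) auto
  have l: "length ys' = length xs" using snoc.prems(3) ys by simp
  have g1: "gr m xs" using snoc.prems(1) gr_snoc by blast
  have g2: "gr m ys'" using snoc.prems(2) ys gr_snoc by blast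
  define u where "u = Useq m (length xs)"
  have b1: "0 \<le> vl m xs" "vl m xs < u" using g1 gr_bound vl_nonneg[OF m3] u_def by auto
  have b2: "0 \<le> vl m ys'" "vl m ys' < u" using gr_bound[OF g2] vl_nonneg[OF m3] u_def l by auto
  have e: "vl m xs + int x * u = vl m ys' + int y * u" using snoc.prems(4) ys l vl_snoc u_def by simp
  have u0: "u \<noteq> 0" using b1 by simp
  have d1: "(vl m xs + int x * u) div u = int x" using b1 u0 by simp
  have d2: "(vl m ys' + int y * u) div u = int y" using b2 u0 by simp
  have xy: "x = y" using d1 d2 e by simp
  then have "vl m xs = vl m ys'" using e by simp
  then have "xs = ys'" using snoc.IH g1 g2 l by simp
  then show ?case using xy ys by simp
qed

lemma gr_pad: assumes m3: "m \<ge> 3" and g: "gr m xs"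
  shows "gr m (xs @ replicate k 0) \<and> vl m (xs @ replicate k 0) = vl m xs"
proof (induction k)
  case 0 then show ?case using g by simp
next
  case (Suc k)
  have eq: "xs @ replicate (Suc k) 0 = (xs @ replicate k 0) @ [0]" by (simp add: replicate_append_same)
  have v: "vl m ((xs @ replicate k 0) @ [0]) = vl m xs" by (subst vl_snoc) (use Suc in simp)
  have "vl m (xs @ replicate k 0) < Useq m (length (xs @ replicate k 0))" using Suc gr_bound by blast
  moreover have "Useq m (length (xs @ replicate k 0)) \<le> Useq m (Suc (length (xs @ replicate k 0)))"
    using U_mono[OF m3] by (smt (verit))
  ultimately have "gr m ((xs @ replicate k 0) @ [0])" unfolding gr_snoc using Suc v by simp
  then show ?case using eq v by simp
qed

lemma isU_unique1: assumes m3: "m \<ge> 3" and h1: "is_U_expansion m n d1" and h2: "is_U_expansion m n d2"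
  and le: "length d1 \<le> length d2" shows "d1 = d2"
proof -
  let ?p = "d1 @ replicate (length d2 - length d1) 0"
  have g1: "gr m d1" "int n = vl m d1" using h1 isU_iff by auto
  have g2: "gr m d2" "int n = vl m d2" "d2 \<noteq> [] \<longrightarrow> last d2 \<noteq> 0" using h2 isU_iff by auto
  have p: "gr m ?p" "vl m ?p = vl m d1" using gr_pad[OF m3 g1(1)] by auto
  have pe: "?p = d2" using gr_unique[OF m3 p(1) g2(1)] p(2) g1(2) g2(2) le by simp
  show ?thesis
  proof (cases "length d1 = length d2")
    case True then show ?thesis using pe by simp
  next
    case False
    then have "length d2 - length d1 > 0" using le by simp
    then have "last ?p = 0" by (simp add: last_append)
    moreover have "d2 \<noteq> []" using False le by auto
    ultimately show ?thesis using pe g2(3) by simp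
  qed
qed

lemma isU_unique: assumes m3: "m \<ge> 3" and h1: "is_U_expansion m n d1" and h2: "is_U_expansion m n d2"
  shows "d1 = d2"
  using isU_unique1[OF m3 h1 h2] isU_unique1[OF m3 h2 h1] by (cases "length d1 \<le> length d2") auto

lemma gr_exists: assumes m3: "m \<ge> 3"
  shows "0 \<le> v \<Longrightarrow> v < Useq m L \<Longrightarrow> \<exists>xs. length xs = L \<and> gr m xs \<and> vl m xs = v"
proof (induction L arbitrary: v)
  case 0
  then have "v = 0" by simp
  then show ?case by (intro exI[of _ "[]"]) (simp add: gr_def vl_def)
next
  case (Suc L)
  define u where "u = Useq m L"
  have u0: "u > 0" using U_mono[OF m3, of L] u_def by simp
  have r: "0 \<le> v mod u" "v mod u < u" using u0 by auto
  obtain xs where xs: "length xs = L" "gr m xs" "vl m xs = v mod u" using Suc.IH[OF r(1)] r(2) u_def by auto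
  have q: "v div u \<ge> 0" using Suc.prems u0 by (simp add: pos_imp_zdiv_nonneg_iff)
  have val: "vl m (xs @ [nat (v div u)]) = v" using vl_snoc xs q u_def
    by (simp add: mult.commute) 
  have "gr m (xs @ [nat (v div u)])" using gr_snoc xs val Suc.prems by simp
  then show ?case using val xs by (intro exI[of _ "xs @ [nat (v div u)]"]) simp
qed

lemma gr_trim: "gr m xs \<Longrightarrow> \<exists>ys. gr m ys \<and> vl m ys = vl m xs \<and> (ys \<noteq> [] \<longrightarrow> last ys \<noteq> 0)"
proof (induction xs rule: rev_induct)
  case Nil then show ?case by auto
next
  case (snoc x xs)
  show ?case
  proof (cases "x = 0")
    case False then show ?thesis using snoc.prems by (intro exI[of _ "xs @ [x]"]) simp
  next
    case True
    then have "gr m xs" "vl m (xs @ [x]) = vl m xs" using snoc.prems gr_snoc vl_snoc by auto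
    then obtain ys where "gr m ys" "vl m ys = vl m xs" "ys \<noteq> [] \<longrightarrow> last ys \<noteq> 0"
      using snoc.IH by blast
    then show ?thesis using \<open>vl m (xs @ [x]) = vl m xs\<close> by (intro exI[of _ ys]) simp
  qed
qed

lemma isU_exists: assumes m3: "m \<ge> 3" shows "\<exists>ds. is_U_expansion m n ds"
proof -
  have h: "int n < Useq m n" using U_ge[OF m3, of n] by simp
  have "\<exists>xs. length xs = n \<and> gr m xs \<and> vl m xs = int n"
    by (rule gr_exists[OF m3]) (use h in auto)
  then obtain xs where xs: "gr m xs" "vl m xs = int n" by blast
  obtain ys where ys: "gr m ys" "vl m ys = int n" "ys \<noteq> [] \<longrightarrow> last ys \<noteq> 0"
    using gr_trim[OF xs(1)] unfolding xs(2) by blast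
  have "is_U_expansion m n ys" unfolding isU_iff using ys by simp
  then show ?thesis by blast
qed

lemma U_expansion_eq: assumes m3: "m \<ge> 3" and h: "is_U_expansion m n ds" shows "U_expansion m n = ds"
  unfolding U_expansion_def
proof (rule the_equality)
  show "is_U_expansion m n ds" by (rule h)
  show "d = ds" if "is_U_expansion m n d" for d using isU_unique[OF m3 that h] .
qed

lemma U_expansion_is: assumes m3: "m \<ge> 3" shows "is_U_expansion m n (U_expansion m n)"
proof -
  obtain ds where h: "is_U_expansion m n ds" using isU_exists[OF m3] by blast
  show ?thesis using U_expansion_eq[OF m3 h] h by simp
qed

lemma U_beta: assumes hb: "\<beta> * \<beta> = real m * \<beta> - 1" and b0: "\<beta> > 0"
  shows "real_of_int (Useq m (Suc k)) = \<beta> * real_of_int (Useq m k) + 1 / \<beta> ^ Suc k"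
proof (induction k)
  case 0
  have "real m = \<beta> + 1 / \<beta>" using hb b0 by (simp add: field_simps)
  then show ?case by simp
next
  case (Suc k)
  have m1: "real m = \<beta> + 1 / \<beta>" using hb b0 by (simp add: field_simps)
  define a where "a = real_of_int (Useq m (Suc k))"
  define c where "c = real_of_int (Useq m k)"
  have c: "c = a / \<beta> - 1 / \<beta> ^ Suc (Suc k)" using Suc b0 unfolding a_def c_def by (simp add: field_simps)
  have "real_of_int (Useq m (Suc (Suc k))) = real m * a - c" unfolding a_def c_def by simp
  also have "\<dots> = \<beta> * a + 1 / \<beta> ^ Suc (Suc k)" unfolding m1 c using b0 by (simp add: field_simps)
  finally show ?case unfolding a_def by simp
qed

lemma xv_cons: "xv b (a # r) = (real a + xv b r) / b"
  unfolding xv_def by (simp only: length_Cons sum.lessThan_Suc_shift) (simp add: sum_divide_distrib add_divide_distrib mult.commute)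

lemma xv_snoc: "xv b (xs @ [x]) = xv b xs + real x / b ^ Suc (length xs)"
proof -
  have "(\<Sum>k<length xs. real ((xs@[x]) ! k) / b ^ Suc k) = (\<Sum>k<length xs. real (xs ! k) / b ^ Suc k)"
    by (intro sum.cong) (auto simp: nth_append)
  then show ?thesis unfolding xv_def by simp
qed

lemma xv_nonneg: "b > 0 \<Longrightarrow> 0 \<le> xv b xs"
  unfolding xv_def by (intro sum_nonneg) simp

lemma vl_cons_div: assumes hb: "\<beta> * \<beta> = real m * \<beta> - 1" and b0: "\<beta> > 0"
  shows "real_of_int (vl m (a # r)) / \<beta> = real_of_int (vl m r) + xv \<beta> (a # r)"
proof -
  have v: "vl m (a # r) = int a + (\<Sum>k<length r. int (r ! k) * Useq m (Suc k))"
    unfolding vl_def by (simp only: length_Cons sum.lessThan_Suc_shift) simp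
  have "real_of_int (\<Sum>k<length r. int (r ! k) * Useq m (Suc k))
      = (\<Sum>k<length r. real (r ! k) * (\<beta> * real_of_int (Useq m k) + 1 / \<beta> ^ Suc k))"
    using U_beta[OF hb b0] by simp
  also have "\<dots> = \<beta> * real_of_int (vl m r) + xv \<beta> r"
    unfolding vl_def xv_def by (simp add: algebra_simps sum.distrib sum_distrib_left)
  finally have "real_of_int (vl m (a # r)) = real a + \<beta> * real_of_int (vl m r) + xv \<beta> r"
    using v by simp
  then show ?thesis unfolding xv_cons using b0 by (simp add: field_simps)
qed

lemma gr_cons: assumes hb: "\<beta> * \<beta> = real m * \<beta> - 1" and b1: "\<beta> > 1" and g: "gr m (a # r)"
  shows "gr m r"
  unfolding gr_def
proof (intro allI impI)
  fix i assume i: "i < length r"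
  have b0: "\<beta> > 0" using b1 by simp
  define P where "P = (\<Sum>k\<le>i. int (r ! k) * Useq m k)"
  define S where "S = (\<Sum>k\<le>i. int (r ! k) * Useq m (Suc k))"
  define s where "s = (\<Sum>k\<le>i. real (r ! k) / \<beta> ^ Suc k)"
  have s0: "s \<ge> 0" unfolding s_def using b0 by (intro sum_nonneg) simp
  have "(\<Sum>k\<le>Suc i. int ((a # r) ! k) * Useq m k) < Useq m (Suc (Suc i))"
  proof -
    have "Suc i < length (a # r)" using i by simp
    then show ?thesis using g unfolding gr_def by blast
  qed
  then have lt: "int a + S < Useq m (Suc (Suc i))" unfolding S_def by (simp only: sum.atMost_Suc_shift) simp
  have "real_of_int S = (\<Sum>k\<le>i. real (r ! k) * (\<beta> * real_of_int (Useq m k) + 1 / \<beta> ^ Suc k))"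
    unfolding S_def using U_beta[OF hb b0] by simp
  also have "\<dots> = \<beta> * real_of_int P + s"
    unfolding P_def s_def by (simp add: algebra_simps sum.distrib sum_distrib_left)
  finally have Se: "real_of_int S = \<beta> * real_of_int P + s" .
  have U2: "real_of_int (Useq m (Suc (Suc i))) = \<beta> * real_of_int (Useq m (Suc i)) + 1 / \<beta> ^ Suc (Suc i)"
    using U_beta[OF hb b0] by blast
  have "1 < \<beta> ^ Suc (Suc i)" using b1 by (intro one_less_power) auto
  then have small: "1 / \<beta> ^ Suc (Suc i) < 1" by simp
  have "int a + S \<le> Useq m (Suc (Suc i)) - 1" using lt by simp
  then have "real_of_int (int a + S) \<le> real_of_int (Useq m (Suc (Suc i)) - 1)"
    by (simp only: of_int_le_iff)
  then have "real a + real_of_int S \<le> real_of_int (Useq m (Suc (Suc i))) - 1" by simp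
  then have "\<beta> * real_of_int P < \<beta> * real_of_int (Useq m (Suc i))" using Se U2 small s0 by simp
  then have "real_of_int P < real_of_int (Useq m (Suc i))" using b0 by simp
  then have "P < Useq m (Suc i)" by (simp only: of_int_less_iff)
  then show "(\<Sum>k\<le>i. int (r ! k) * Useq m k) < Useq m (Suc i)" unfolding P_def .
qed

lemma AB:
  assumes m3: "m \<ge> 3" and hb: "\<beta> * \<beta> = real m * \<beta> - 1" and hbm: "\<beta> > real m - 1"
  shows "gr m ds \<Longrightarrow> ds \<noteq> [] \<Longrightarrow>
      xv \<beta> ds \<le> 1 - (real m - 2) / ((\<beta> - 1) * \<beta> ^ length ds) \<and>
      (vl m ds < Useq m (length ds) - Useq m (length ds - 1) \<longrightarrow>
        xv \<beta> ds \<le> 1 - (real m - 2) / ((\<beta> - 1) * \<beta> ^ length ds) - 1 / \<beta> ^ length ds)"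
proof (induction ds rule: rev_induct)
  case Nil then show ?case by simp
next
  case (snoc q xs)
  have m3r: "real m \<ge> 3" using m3 by simp
  have b1: "\<beta> > 1" using hbm m3r by simp
  have b0: "\<beta> > 0" using b1 by simp
  have g: "gr m xs" and lt: "vl m (xs@[q]) < Useq m (Suc (length xs))" using snoc.prems gr_snoc by auto
  have xq: "xv \<beta> (xs@[q]) = xv \<beta> xs + real q / \<beta>^Suc (length xs)" by (rule xv_snoc)
  have vq: "vl m (xs@[q]) = vl m xs + int q * Useq m (length xs)" by (rule vl_snoc)
  show ?case
  proof (cases "xs = []")
    case True
    have vl1: "vl m (xs@[q]) = int q" using True by (simp add: vl_def)
    have xv1: "xv \<beta> (xs@[q]) = real q / \<beta>" using True by (simp add: xv_def)
    have qm: "q \<le> m - 1" using lt vl1 True by simp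
    have e1: "1 - (real m - 2) / ((\<beta> - 1) * \<beta>) = (real m - 1) / \<beta>"
    proof -
      have hb3: "\<beta> * (\<beta> * \<beta>) = \<beta> * (\<beta> * real m) - \<beta>"
      proof -
        have "\<beta> * (\<beta> * \<beta>) = \<beta> * (real m * \<beta> - 1)" using hb by simp
        then show ?thesis by (simp add: algebra_simps)
      qed
      show ?thesis using b1 hb hb3 by (simp add: field_simps)
    qed
    have e2: "1 - (real m - 2) / ((\<beta> - 1) * \<beta>) - 1 / \<beta> = (real m - 2) / \<beta>"
    proof -
      have "(real m - 1)/\<beta> - 1/\<beta> = (real m - 2)/\<beta>" by (simp add: diff_divide_distrib[symmetric])
      then show ?thesis using e1 by linarith
    qed
    have A: "real q / \<beta> \<le> (real m - 1) / \<beta>" using qm m3 b0 by (intro divide_right_mono) auto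
    have B: "real q / \<beta> \<le> (real m - 2) / \<beta>" if "int q < int m - 1"
      using that b0 by (intro divide_right_mono) auto
    show ?thesis using True vl1 xv1 e1 e2 A B by simp
  next
    case False
    have IH: "xv \<beta> xs \<le> 1 - (real m - 2) / ((\<beta> - 1) * \<beta> ^ length xs)"
      "vl m xs < Useq m (length xs) - Useq m (length xs - 1) \<Longrightarrow>
        xv \<beta> xs \<le> 1 - (real m - 2) / ((\<beta> - 1) * \<beta> ^ length xs) - 1 / \<beta> ^ length xs"
      using snoc.IH g False by auto
    obtain L' where L': "length xs = Suc L'" using False by (cases xs) auto
    define L where "L = length xs"
    define u where "u = Useq m L"
    define w where "w = Useq m L'"
    define v where "v = vl m xs"
    have v0: "0 \<le> v" using vl_nonneg[OF m3] v_def by simp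
    have w0: "0 \<le> w" using U_mono[OF m3] w_def by (smt (verit))
    have u0: "0 < u" using U_mono[OF m3] u_def by (smt (verit))
    have US: "Useq m (Suc L) = int m * u - w" unfolding u_def w_def L_def L' by simp
    have lt2: "v + int q * u < int m * u - w" using lt vq US unfolding v_def L_def u_def by simp
    have qm: "q \<le> m - 1"
    proof (rule ccontr)
      assume "\<not> q \<le> m - 1"
      then have "int m \<le> int q" by simp
      then have "int m * u \<le> int q * u" using u0 by (intro mult_right_mono) auto
      then show False using lt2 v0 w0 by simp
    qed
    define p where "p = \<beta> ^ Suc L"
    have p0: "p > 0" unfolding p_def using b0 by simp
    define D where "D = (real m - 2) / ((\<beta> - 1) * \<beta> ^ L)"
    define D' where "D' = (real m - 2) / ((\<beta> - 1) * p)"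
    have DD: "D = D' + (real m - 2) / p" unfolding D_def D'_def p_def using b1
      by (simp add: field_simps)
    have pp: "1 / p \<le> 1 / \<beta> ^ L" unfolding p_def using b1
      by (simp add: field_simps)
    have xq': "xv \<beta> (xs@[q]) = xv \<beta> xs + real q / p" using xq p_def L_def by simp
    have IA: "xv \<beta> xs \<le> 1 - D" using IH(1) D_def L_def by simp
    have IB: "v < u - w \<Longrightarrow> xv \<beta> xs \<le> 1 - D - 1 / \<beta> ^ L"
      using IH(2) D_def L_def u_def w_def v_def L' by simp
    have A: "xv \<beta> (xs@[q]) \<le> 1 - D'"
    proof (cases "q = m - 1")
      case True
      then have "v < u - w" using lt2 m3 by (simp add: algebra_simps of_nat_diff)
      then have "xv \<beta> xs \<le> 1 - D - 1 / \<beta> ^ L" by (rule IB)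
      moreover have "real q / p = (real m - 2) / p + 1 / p" using True m3 p0
        by (simp add: field_simps of_nat_diff)
      ultimately show ?thesis using xq' DD pp by simp
    next
      case False
      then have "real q \<le> real m - 2" using qm m3 by simp
      then have "real q / p \<le> (real m - 2) / p" using p0 by (intro divide_right_mono) auto
      then show ?thesis using xq' DD IA by simp
    qed
    have B: "xv \<beta> (xs@[q]) \<le> 1 - D' - 1 / p" if hB: "vl m (xs @ [q]) < Useq m (length (xs @ [q])) - Useq m (length (xs @ [q]) - 1)"
    proof -
      have lt3: "v + int q * u < (int m - 1) * u - w" using hB vq US unfolding v_def L_def u_def
        by (simp add: algebra_simps)
      have qm2: "q \<le> m - 2"
      proof (rule ccontr)
        assume "\<not> q \<le> m - 2"
        then have "int m - 1 \<le> int q" by simp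
        then have "(int m - 1) * u \<le> int q * u" using u0 by (intro mult_right_mono) auto
        then show False using lt3 v0 w0 by simp
      qed
      show ?thesis
      proof (cases "q = m - 2")
        case True
        then have "v < u - w" using lt3 m3 by (simp add: algebra_simps of_nat_diff)
        then have "xv \<beta> xs \<le> 1 - D - 1 / \<beta> ^ L" by (rule IB)
        moreover have "real q = real m - 2" using True m3 by (simp add: of_nat_diff)
        ultimately show ?thesis using xq' DD pp by simp
      next
        case False
        then have "real q \<le> real m - 3" using qm2 m3 by simp
        then have "real q / p \<le> (real m - 3) / p" using p0 by (intro divide_right_mono) auto
        moreover have "(real m - 3) / p = (real m - 2) / p - 1 / p" by (simp add: diff_divide_distrib)
        ultimately show ?thesis using xq' DD IA by simp
      qed
    qed
    show ?thesis using A B unfolding D'_def p_def L_def by simp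
  qed
qed

lemma xv_lt1: assumes m3: "m \<ge> 3" and hb: "\<beta> * \<beta> = real m * \<beta> - 1" and hbm: "\<beta> > real m - 1"
  and g: "gr m ds" shows "xv \<beta> ds < 1"
proof (cases "ds = []")
  case True then show ?thesis by (simp add: xv_def)
next
  case False
  have b1: "\<beta> > 1" using hbm m3 by simp
  have "(real m - 2) / ((\<beta> - 1) * \<beta> ^ length ds) > 0" using b1 m3 by simp
  then show ?thesis using AB[OF m3 hb hbm g False] by linarith
qed

lemma T_cons: assumes b0: "\<beta> > 0" and x0: "0 \<le> xv \<beta> r" and x1: "xv \<beta> r < 1"
  shows "\<lfloor>\<beta> * xv \<beta> (a # r)\<rfloor> = int a" and "T_beta \<beta> (xv \<beta> (a # r)) = xv \<beta> r"
proof -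
  have e: "\<beta> * xv \<beta> (a # r) = real a + xv \<beta> r" unfolding xv_cons using b0 by simp
  show f: "\<lfloor>\<beta> * xv \<beta> (a # r)\<rfloor> = int a" proof -
    have "\<lfloor>xv \<beta> r\<rfloor> = 0" using x0 x1 by (simp add: floor_eq_iff)
    then show ?thesis unfolding e by simp
  qed
  show "T_beta \<beta> (xv \<beta> (a # r)) = xv \<beta> r" unfolding T_beta_def f using e by simp
qed

theorem proposition3:
  fixes m n :: nat and \<beta> :: real
  assumes "m \<ge> 3"
    and "\<beta> = (real m + sqrt (real m ^ 2 - 4)) / 2"
  shows "U_expansion m (nat \<lfloor>real n / \<beta>\<rfloor>) = tl (U_expansion m n)
       \<and> (\<forall>i\<ge>1. d_beta \<beta> (frac (real n / \<beta>)) i =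
             (if i \<le> length (U_expansion m n)
              then int (U_expansion m n ! (i - 1)) else 0))"
proof -
  note m3 = assms(1)
  define sq where "sq = sqrt (real m ^ 2 - 4)"
  have "real m ^ 2 \<ge> 3 ^ 2" using m3 by (intro power_mono) auto
  then have "real m ^ 2 - 4 \<ge> 0" by simp
  then have sq2: "sq * sq = real m ^ 2 - 4" unfolding sq_def
    by (metis real_sqrt_pow2 power2_eq_square)
  have bdef: "\<beta> = (real m + sq) / 2" using assms(2) sq_def by simp
  have hb: "\<beta> * \<beta> = real m * \<beta> - 1" unfolding bdef using sq2 by (simp add: field_simps power2_eq_square)
  have "(real m - 2)^2 < real m ^ 2 - 4" using m3 by (simp add: power2_eq_square algebra_simps)
  then have "real m - 2 < sq" unfolding sq_def by (rule real_less_rsqrt)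
  then have hbm: "\<beta> > real m - 1" unfolding bdef by simp
  have b1: "\<beta> > 1" using hbm m3 by simp
  have b0: "\<beta> > 0" using b1 by simp
  define ds where "ds = U_expansion m n"
  have H: "is_U_expansion m n ds" unfolding ds_def by (rule U_expansion_is[OF m3])
  have lastd: "ds \<noteq> [] \<longrightarrow> last ds \<noteq> 0" and nv: "int n = vl m ds" and g: "gr m ds"
    using H isU_iff by auto
  have gtl: "gr m (tl xs)" if "gr m xs" for xs
    using that gr_cons[OF hb b1] by (cases xs) auto
  have gd: "gr m (drop j ds)" for j
  proof (induction j)
    case 0 then show ?case using g by simp
  next
    case (Suc j) then show ?case using gtl by (simp add: drop_Suc tl_drop[symmetric])
  qed
  have x1: "xv \<beta> (drop j ds) < 1" for j using xv_lt1[OF m3 hb hbm gd] .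
  have x0: "0 \<le> xv \<beta> xs" for xs using xv_nonneg b0 by blast
  have eq: "real n / \<beta> = real_of_int (vl m (tl ds)) + xv \<beta> ds"
  proof (cases ds)
    case Nil then show ?thesis using nv by (simp add: vl_def xv_def)
  next
    case (Cons a r)
    have "real n = real_of_int (vl m ds)" using nv by (metis of_int_of_nat_eq)
    then show ?thesis using vl_cons_div[OF hb b0, of a r] Cons by simp
  qed
  have fl: "\<lfloor>real n / \<beta>\<rfloor> = vl m (tl ds)" unfolding eq using x0[of ds] x1[of 0] by (simp add: floor_eq_iff)
  have fr: "frac (real n / \<beta>) = xv \<beta> ds" unfolding frac_def fl using eq by simp
  have tlv: "int (nat \<lfloor>real n / \<beta>\<rfloor>) = vl m (tl ds)" unfolding fl using vl_nonneg[OF m3] by simp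
  have Htl: "is_U_expansion m (nat \<lfloor>real n / \<beta>\<rfloor>) (tl ds)"
    unfolding isU_iff using tlv gtl[OF g] lastd by (cases ds) (auto simp: last_tl)
  have P1: "U_expansion m (nat \<lfloor>real n / \<beta>\<rfloor>) = tl ds" by (rule U_expansion_eq[OF m3 Htl])
  have Tit: "(T_beta \<beta> ^^ j) (frac (real n / \<beta>)) = xv \<beta> (drop j ds)" for j
  proof (induction j)
    case 0 then show ?case using fr by simp
  next
    case (Suc j)
    show ?case
    proof (cases "j < length ds")
      case True
      have d: "drop j ds = ds ! j # drop (Suc j) ds" using True by (rule Cons_nth_drop_Suc[symmetric])
      have "(T_beta \<beta> ^^ Suc j) (frac (real n / \<beta>)) = T_beta \<beta> (xv \<beta> (drop j ds))" using Suc by simp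
      also have "\<dots> = xv \<beta> (drop (Suc j) ds)" unfolding d using T_cons(2)[OF b0 x0 x1] by simp
      finally show ?thesis .
    next
      case False
      then have "drop j ds = []" "drop (Suc j) ds = []" by auto
      then show ?thesis using Suc by (simp add: xv_def T_beta_def)
    qed
  qed
  have P2: "d_beta \<beta> (frac (real n / \<beta>)) i = (if i \<le> length ds then int (ds ! (i - 1)) else 0)" if "i \<ge> 1" for i
  proof -
    have "d_beta \<beta> (frac (real n / \<beta>)) i = \<lfloor>\<beta> * xv \<beta> (drop (i - 1) ds)\<rfloor>" unfolding d_beta_def Tit ..
    also have "\<dots> = (if i \<le> length ds then int (ds ! (i - 1)) else 0)"
    proof (cases "i \<le> length ds")
      case True
      then have "i - 1 < length ds" using that by simp
      then have d: "drop (i - 1) ds = ds ! (i - 1) # drop (Suc (i - 1)) ds" by (rule Cons_nth_drop_Suc[symmetric])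
      show ?thesis unfolding d using T_cons(1)[OF b0 x0 x1] True by simp
    next
      case False
      then have "drop (i - 1) ds = []" using that by simp
      then show ?thesis using False by (simp add: xv_def)
    qed
    finally show ?thesis .
  qed
  show ?thesis using P1 P2 unfolding ds_def by simp
qed

end
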